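(* Let $s,q,r\in\mathbb N$ and $c\in\mathbb R^s$. (a) If $K\in\mathbb R^{s\times s}$ is diagonal, then $V_q^{\mathsf T}KV_r$ has Hankel form. (b) If $X\in\mathbb R^{q\times r}$ has Hankel form, then $\mathcal P_q^{\mathsf T}X\mathcal P_r$ and $\mathcal L_{q,r}(X)$ have Hankel form. (c) For all $X\in\mathbb R^{q\times r}$: $\mathcal P_q^{\mathsf T}\mathcal L_{q,r}(X)=\mathcal L_{q,r}(\mathcal P_q^{\mathsf T}X)$ and $\mathcal L_{q,r}(X)\mathcal P_r=\mathcal L_{q,r}(X\mathcal P_r)$.
   Context: $V_k:=(\mathbb 1,c,c^2,\dots,c^{k-1})\in\mathbb R^{s\times k}$ (componentwise powers of the node vector $c$), $\mathcal P_k:=\big(\binom{j-1}{i-1}\big)_{i,j=1}^k$, $\tilde E_k:=(i\,\delta_{i+1,j})_{i,j=1}^k$, and $\mathcal L_{q,r}(X):=\tilde E_q^{\mathsf T}X+X\tilde E_r$ for $X\in\mathbb R^{q\times r}$. A matrix $X=(x_{ij})\in\mathbb R^{q\times r}$ has Hankel form if there are numbers $\xi_k$ with $x_{ij}=\xi_{i+j-1}$ for all $1\le i\le q$, $1\le j\le r$. *)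

theory Defs
  imports "Jordan_Normal_Form.Matrix"
begin

(* Matrices use Jordan_Normal_Form (0-based indices). Paper's 1-based index i corresponds to i-1 here. *)

definition Vmat :: "real vec \<Rightarrow> nat \<Rightarrow> real mat" where
  "Vmat c k = mat (dim_vec c) k (\<lambda>(i,j). (c $ i) ^ j)"

definition Pmat :: "nat \<Rightarrow> real mat" where
  "Pmat k = mat k k (\<lambda>(i,j). real (j choose i))"

definition Etil :: "nat \<Rightarrow> real mat" where
  "Etil k = mat k k (\<lambda>(i,j). if j = i + 1 then real (i + 1) else 0)"

definition Lop :: "nat \<Rightarrow> nat \<Rightarrow> real mat \<Rightarrow> real mat" where
  "Lop q r X = (Etil q)\<^sup>T * X + X * Etil r"

definition hankel_form :: "real mat \<Rightarrow> bool" where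
  "hankel_form X \<longleftrightarrow> (\<exists>\<xi>::nat \<Rightarrow> real. \<forall>i<dim_row X. \<forall>j<dim_col X. X $$ (i,j) = \<xi> (i + j))"

end

theory Submission
  imports Defs
begin

lemma sum_delta_nat: fixes n b :: nat shows "(\<Sum>a<n. if a = b then g a else (0::real)) = (if b < n then g b else 0)"
  by (subst sum.delta) auto

lemma sum_delta_l: fixes n b :: nat shows "(\<Sum>a<n. (if a = b then x else (0::real)) * g a) = (if b < n then x * g b else 0)"
  proof -
  have "(\<Sum>a<n. (if a = b then x else (0::real)) * g a) = (\<Sum>a<n. if a = b then x * g a else 0)"
    by (rule sum.cong) auto
  then show ?thesis using sum_delta_nat[where n=n and b=b and g="\<lambda>a. x * g a"] by simp
qed

lemma sum_delta_r: fixes n j :: nat shows "(\<Sum>a<n. g a * (if j = Suc a then x a else (0::real))) = (if 0 < j \<and> j - 1 < n then g (j-1) * x (j-1) else 0)"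
proof -
  have "(\<Sum>a<n. g a * (if j = Suc a then x a else (0::real))) = (\<Sum>a<n. if a = j - 1 \<and> 0 < j then g a * x a else 0)"
    by (rule sum.cong) auto
  also have "\<dots> = (if 0 < j \<and> j - 1 < n then g (j-1) * x (j-1) else 0)"
    by (cases "0 < j") (simp_all add: sum_delta_nat)
  finally show ?thesis .
qed

lemma EP_comm: "Etil k * Pmat k = Pmat k * Etil k"
proof (rule eq_matI)
  fix i j assume ij: "i < dim_row (Pmat k * Etil k)" "j < dim_col (Pmat k * Etil k)"
  hence i: "i < k" and j: "j < k" by (auto simp: Pmat_def Etil_def)
  have l: "(Etil k * Pmat k) $$ (i,j) = (if i+1 < k then real (i+1) * real (j choose (i+1)) else 0)"
    using i j by (simp add: Pmat_def Etil_def scalar_prod_def atLeast0LessThan sum_delta_l)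
  have r: "(Pmat k * Etil k) $$ (i,j) = (if 0 < j then real ((j-1) choose i) * real j else 0)"
    using i j by (auto simp add: Pmat_def Etil_def scalar_prod_def atLeast0LessThan sum_delta_r)
  have c: "(i+1) * (j choose (i+1)) = (if j > 0 then ((j-1) choose i) * j else 0)"
  proof (cases j)
    case (Suc m) then show ?thesis using Suc_times_binomial[of i m] by (simp only: Suc_eq_plus1 diff_Suc_1 mult.commute) simp
  qed simp
  have c': "real (i+1) * real (j choose (i+1)) = (if j > 0 then real ((j-1) choose i) * real j else 0)"
    using arg_cong[OF c, of real] by (simp only: of_nat_mult[symmetric]) (simp split: if_splits)
  show "(Etil k * Pmat k) $$ (i,j) = (Pmat k * Etil k) $$ (i,j)"
    unfolding l r
  proof (cases "i+1 < k")
    case True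
    then show "(if i+1 < k then real (i+1) * real (j choose (i+1)) else 0) = (if 0 < j then real ((j-1) choose i) * real j else 0)"
      using c' by simp
  next
    case False
    then have "i + 1 > j" using j by simp
    then show "(if i+1 < k then real (i+1) * real (j choose (i+1)) else 0) = (if 0 < j then real ((j-1) choose i) * real j else 0)"
      using False by auto
  qed
qed (auto simp: Pmat_def Etil_def)


lemma Lop_entry:
  assumes X: "X \<in> carrier_mat q r" and i: "i < q" and j: "j < r"
  shows "Lop q r X $$ (i,j) = (if 0 < i then real i * X $$ (i-1,j) else 0) + (if 0 < j then real j * X $$ (i,j-1) else 0)"
proof -
  have e1: "((Etil q)\<^sup>T * X) $$ (i,j) = (\<Sum>a<q. X $$ (a,j) * (if i = Suc a then real (Suc a) else 0))"
    using X i j by (auto simp: Etil_def scalar_prod_def atLeast0LessThan mult.commute intro!: sum.cong)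
  have e2: "(X * Etil r) $$ (i,j) = (\<Sum>a<r. X $$ (i,a) * (if j = Suc a then real (Suc a) else 0))"
    using X i j by (auto simp: Etil_def scalar_prod_def atLeast0LessThan intro!: sum.cong)
  have "Lop q r X $$ (i,j) = ((Etil q)\<^sup>T * X) $$ (i,j) + (X * Etil r) $$ (i,j)"
    using X i j by (simp add: Lop_def Etil_def)
  also have "\<dots> = (if 0 < i then real i * X $$ (i-1,j) else 0) + (if 0 < j then real j * X $$ (i,j-1) else 0)"
    unfolding e1 e2 sum_delta_r using i j by auto
  finally show ?thesis .
qed

lemma pascal_sum:
  "(\<Sum>a\<le>Suc i. real (Suc i choose a) * h a) = (\<Sum>a\<le>i. real (i choose a) * h a) + (\<Sum>a\<le>i. real (i choose a) * h (Suc a))"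
proof -
  have A: "(\<Sum>a\<le>Suc i. real (Suc i choose a) * h a) = h 0 + (\<Sum>a\<le>i. real (i choose a) * h (Suc a)) + (\<Sum>a\<le>i. real (i choose Suc a) * h (Suc a))"
    by (subst sum.atMost_Suc_shift) (simp add: sum.distrib algebra_simps)
  have B: "(\<Sum>a\<le>Suc i. real (i choose a) * h a) = h 0 + (\<Sum>a\<le>i. real (i choose Suc a) * h (Suc a))"
    by (subst sum.atMost_Suc_shift) simp
  have C: "(\<Sum>a\<le>Suc i. real (i choose a) * h a) = (\<Sum>a\<le>i. real (i choose a) * h a)"
    by simp
  show ?thesis using A B C by simp
qed

lemma Z_shift:
  "\<forall>j f. (\<Sum>a\<le>i. real (i choose a) * (\<Sum>b\<le>j. real (j choose b) * f (a+b)))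
     = (\<Sum>b\<le>i+j. real ((i+j) choose b) * (f b :: real))"
proof (induction i)
  case 0
  then show ?case by simp
next
  case (Suc i)
  show ?case
  proof (intro allI)
    fix j and f :: "nat \<Rightarrow> real"
    have "(\<Sum>a\<le>Suc i. real (Suc i choose a) * (\<Sum>b\<le>j. real (j choose b) * f (a+b)))
      = (\<Sum>a\<le>i. real (i choose a) * (\<Sum>b\<le>j. real (j choose b) * f (a+b)))
        + (\<Sum>a\<le>i. real (i choose a) * (\<Sum>b\<le>j. real (j choose b) * (\<lambda>n. f (Suc n)) (a+b)))"
      by (subst pascal_sum) simp
    also have "\<dots> = (\<Sum>b\<le>i+j. real ((i+j) choose b) * f b) + (\<Sum>b\<le>i+j. real ((i+j) choose b) * f (Suc b))"
      using Suc.IH[rule_format, of j f] Suc.IH[rule_format, of j "\<lambda>n. f (Suc n)"] by simp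
    also have "\<dots> = (\<Sum>b\<le>Suc i+j. real ((Suc i+j) choose b) * f b)"
      using pascal_sum[of "i+j" f] by simp
    finally show "(\<Sum>a\<le>Suc i. real (Suc i choose a) * (\<Sum>b\<le>j. real (j choose b) * f (a+b)))
     = (\<Sum>b\<le>Suc i+j. real ((Suc i+j) choose b) * f b)" .
  qed
qed

lemma trunc_sum:
  fixes i q :: nat assumes "i < q"
  shows "(\<Sum>a<q. real (i choose a) * h a) = (\<Sum>a\<le>i. real (i choose a) * (h a :: real))"
  by (rule sum.mono_neutral_right) (use assms in auto)

lemma PXP_hankel:
  assumes X: "X \<in> carrier_mat q r" and h: "hankel_form X"
  shows "hankel_form ((Pmat q)\<^sup>T * X * Pmat r)"
proof -
  obtain \<xi> where xi: "\<forall>i<q. \<forall>j<r. X $$ (i,j) = \<xi> (i+j)"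
    using h X unfolding hankel_form_def by auto
  show ?thesis unfolding hankel_form_def
  proof (intro exI allI impI)
    fix i j assume "i < dim_row ((Pmat q)\<^sup>T * X * Pmat r)" "j < dim_col ((Pmat q)\<^sup>T * X * Pmat r)"
    hence i: "i < q" and j: "j < r" using X by (auto simp: Pmat_def)
    have "((Pmat q)\<^sup>T * X * Pmat r) $$ (i,j) = (\<Sum>b<r. (\<Sum>a<q. real (i choose a) * \<xi> (a+b)) * real (j choose b))"
      using X i j xi by (auto simp: Pmat_def scalar_prod_def atLeast0LessThan intro!: sum.cong)
    also have "\<dots> = (\<Sum>a<q. real (i choose a) * (\<Sum>b<r. real (j choose b) * \<xi> (a+b)))"
      by (simp add: sum_distrib_left sum_distrib_right algebra_simps sum.swap[of _ "{..<r}"])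
    also have "\<dots> = (\<Sum>a\<le>i. real (i choose a) * (\<Sum>b\<le>j. real (j choose b) * \<xi> (a+b)))"
      using trunc_sum[OF i] trunc_sum[OF j] by simp
    also have "\<dots> = (\<Sum>b\<le>i+j. real ((i+j) choose b) * \<xi> b)"
      using Z_shift by blast
    finally show "((Pmat q)\<^sup>T * X * Pmat r) $$ (i,j) = (\<lambda>n. \<Sum>b\<le>n. real (n choose b) * \<xi> b) (i+j)" by simp
  qed
qed

lemma L_hankel:
  assumes X: "X \<in> carrier_mat q r" and h: "hankel_form X"
  shows "hankel_form (Lop q r X)"
proof -
  obtain \<xi> where xi: "\<forall>i<q. \<forall>j<r. X $$ (i,j) = \<xi> (i+j)"
    using h X unfolding hankel_form_def by auto
  show ?thesis unfolding hankel_form_def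
  proof (intro exI allI impI)
    fix i j assume "i < dim_row (Lop q r X)" "j < dim_col (Lop q r X)"
    hence i: "i < q" and j: "j < r" using X by (auto simp: Lop_def Etil_def)
    show "Lop q r X $$ (i,j) = (\<lambda>n. real n * \<xi> (n - 1)) (i+j)"
      using Lop_entry[OF X i j] xi i j by (auto simp: algebra_simps)
  qed
qed

lemma V_hankel:
  assumes c: "c \<in> carrier_vec s" and K: "K \<in> carrier_mat s s" and d: "diagonal_mat K"
  shows "hankel_form ((Vmat c q)\<^sup>T * K * Vmat c r)"
  unfolding hankel_form_def
proof (intro exI allI impI)
  fix i j assume "i < dim_row ((Vmat c q)\<^sup>T * K * Vmat c r)" "j < dim_col ((Vmat c q)\<^sup>T * K * Vmat c r)"
  hence i: "i < q" and j: "j < r" by (auto simp: Vmat_def)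
  have dK: "\<And>a b. a < s \<Longrightarrow> b < s \<Longrightarrow> a \<noteq> b \<Longrightarrow> K $$ (a,b) = 0"
    using d K unfolding diagonal_mat_def by auto
  have "((Vmat c q)\<^sup>T * K * Vmat c r) $$ (i,j) = (\<Sum>b<s. (\<Sum>a<s. (c $ a)^i * K $$ (a,b)) * (c $ b)^j)"
    using c K i j by (auto simp: Vmat_def scalar_prod_def atLeast0LessThan intro!: sum.cong)
  also have "\<dots> = (\<Sum>b<s. ((c $ b)^i * K $$ (b,b)) * (c $ b)^j)"
  proof (rule sum.cong[OF refl])
    fix b assume b: "b \<in> {..<s}"
    have "(\<Sum>a<s. (c $ a)^i * K $$ (a,b)) = (\<Sum>a<s. if a = b then (c $ a)^i * K $$ (a,b) else 0)"
      by (rule sum.cong) (use b dK in auto)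
    then show "(\<Sum>a<s. (c $ a)^i * K $$ (a,b)) * (c $ b)^j = ((c $ b)^i * K $$ (b,b)) * (c $ b)^j"
      using b by (simp add: sum_delta_nat)
  qed
  also have "\<dots> = (\<lambda>n. \<Sum>b<s. K $$ (b,b) * (c $ b)^n) (i+j)"
    by (simp add: power_add algebra_simps)
  finally show "((Vmat c q)\<^sup>T * K * Vmat c r) $$ (i,j) = (\<lambda>n. \<Sum>b<s. K $$ (b,b) * (c $ b)^n) (i+j)" .
qed

lemma part_c:
  assumes X: "X \<in> carrier_mat q r"
  shows "(Pmat q)\<^sup>T * Lop q r X = Lop q r ((Pmat q)\<^sup>T * X)
          \<and> Lop q r X * Pmat r = Lop q r (X * Pmat r)"
proof
  have P: "Pmat q \<in> carrier_mat q q" "Pmat r \<in> carrier_mat r r" by (auto simp: Pmat_def)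
  have E: "Etil q \<in> carrier_mat q q" "Etil r \<in> carrier_mat r r" by (auto simp: Etil_def)
  have PE: "(Pmat q)\<^sup>T * (Etil q)\<^sup>T = (Etil q)\<^sup>T * (Pmat q)\<^sup>T"
    using EP_comm[of q] P E by (metis transpose_mult)
  show "(Pmat q)\<^sup>T * Lop q r X = Lop q r ((Pmat q)\<^sup>T * X)"
  proof -
    have "(Pmat q)\<^sup>T * Lop q r X = (Pmat q)\<^sup>T * ((Etil q)\<^sup>T * X) + (Pmat q)\<^sup>T * (X * Etil r)"
      unfolding Lop_def using P E X by (subst mult_add_distrib_mat[of _ q q]) auto
    also have "\<dots> = ((Pmat q)\<^sup>T * (Etil q)\<^sup>T) * X + ((Pmat q)\<^sup>T * X) * Etil r"
      using P E X by (simp add: assoc_mult_mat[of _ q q _ q _ r] assoc_mult_mat[of _ q q _ r _ r])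
    also have "\<dots> = (Etil q)\<^sup>T * ((Pmat q)\<^sup>T * X) + ((Pmat q)\<^sup>T * X) * Etil r"
      unfolding PE using P E X by (simp add: assoc_mult_mat[of _ q q _ q _ r])
    finally show ?thesis unfolding Lop_def .
  qed
  show "Lop q r X * Pmat r = Lop q r (X * Pmat r)"
  proof -
    have "Lop q r X * Pmat r = ((Etil q)\<^sup>T * X) * Pmat r + (X * Etil r) * Pmat r"
      unfolding Lop_def using P E X by (subst add_mult_distrib_mat[of _ q r]) auto
    also have "\<dots> = (Etil q)\<^sup>T * (X * Pmat r) + X * (Etil r * Pmat r)"
      using P E X by (simp add: assoc_mult_mat[of _ q q _ r _ r] assoc_mult_mat[of _ q r _ r _ r])
    also have "\<dots> = (Etil q)\<^sup>T * (X * Pmat r) + (X * Pmat r) * Etil r"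
      unfolding EP_comm using P E X by (simp add: assoc_mult_mat[of _ q r _ r _ r])
    finally show ?thesis unfolding Lop_def .
  qed
qed

theorem lemma4p3:
  fixes s q r :: nat and c :: "real vec"
  assumes "c \<in> carrier_vec s"
  shows "(\<forall>K \<in> carrier_mat s s. diagonal_mat K \<longrightarrow>
            hankel_form ((Vmat c q)\<^sup>T * K * Vmat c r))
       \<and> (\<forall>X \<in> carrier_mat q r. hankel_form X \<longrightarrow>
            hankel_form ((Pmat q)\<^sup>T * X * Pmat r) \<and> hankel_form (Lop q r X))
       \<and> (\<forall>X \<in> carrier_mat q r.
            (Pmat q)\<^sup>T * Lop q r X = Lop q r ((Pmat q)\<^sup>T * X)
          \<and> Lop q r X * Pmat r = Lop q r (X * Pmat r))"
  using V_hankel[OF assms] PXP_hankel L_hankel part_c by blast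

end
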